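(* Let $A$ be a finite set of integers with $|A|\ge 3$. Then $$|S_2(A)|=(|A|-1)\cdot 2-3\binom 22+1=2|A|-4$$ if and only if one of the following (i)–(v) holds. (i) $A=\{c,\pm d\}$ for some $c\in\mathbb Z$ and $d\in\mathbb Z^+$ with $|c|\neq d$. (ii) $A=\{\pm c,\pm d\}$ for some $c,d\in\mathbb Z^+$ with $c\neq d$. (iii) $A=\{\pm d\}\cup \{c\pm d\}$ for some $c\in\mathbb Z$ and $d\in\mathbb Z^+$ with $c\neq 0,\pm 2d$. (iv) $A=\{rd:\ s\le r\le t\}$ for some integers $d\neq0$, $s\le-1$ and $t\ge1$ with $t-s\ge4$. (v) $A=\{(2r-1)d:\ s\le r\le t\}$ for some integers $d\neq0$, $s\le0$ and $t\ge 1$ with $t-s\ge4$.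
   Context: For a finite set $A\subseteq\mathbb Z$ and a positive integer $n$, define the restricted sumset $$S_n(A)=\{a_1+\cdots+a_n:\ a_1,\ldots,a_n\in A,\ \text{and}\ a_i^2\neq a_j^2\ \text{for}\ 1\le i<j\le n\}.$$ Notation: $\{\pm d\}=\{d,-d\}$, $\{c\pm d\}=\{c+d,c-d\}$, $\mathbb Z^+=\{1,2,3,\ldots\}$. *)

theory Defs
  imports Main
begin

definition restricted_sumset :: "nat \<Rightarrow> int set \<Rightarrow> int set" where
  "restricted_sumset n A =
     {(\<Sum>i\<in>{1..n}. a i) | a. (\<forall>i\<in>{1..n}. a i \<in> A) \<and>
        (\<forall>i\<in>{1..n}. \<forall>j\<in>{1..n}. i < j \<longrightarrow> (a i)^2 \<noteq> (a j)^2)}"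

end

theory Submission
  imports Defs
begin


definition rs :: "int set \<Rightarrow> int set" where
  "rs A = {a + b | a b. a \<in> A \<and> b \<in> A \<and> a \<noteq> b}"

lemma rs_finite: "finite A \<Longrightarrow> finite (rs A)"
proof -
  assume "finite A"
  have "rs A \<subseteq> (\<lambda>(a,b). a+b) ` (A \<times> A)" by (auto simp: rs_def)
  then show ?thesis using \<open>finite A\<close> by (meson finite_SigmaI finite_imageI finite_subset)
qed

lemma rs_mono: "B \<subseteq> A \<Longrightarrow> rs B \<subseteq> rs A" by (auto simp: rs_def)

lemma S2_eq: "restricted_sumset 2 A = rs A - {0}"
proof
  show "restricted_sumset 2 A \<subseteq> rs A - {0}"
  proof
    fix x assume "x \<in> restricted_sumset 2 A"
    then obtain a where x: "x = (\<Sum>i\<in>{1..2::nat}. a i)" and m: "\<forall>i\<in>{1..2}. a i \<in> A"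
      and d: "\<forall>i\<in>{1..2}. \<forall>j\<in>{1..2}. i < j \<longrightarrow> (a i)^2 \<noteq> (a j)^2"
      unfolding restricted_sumset_def by blast
    have "{1..2::nat} = {1,2}" by auto
    then have x2: "x = a 1 + a 2" using x by simp
    have "(a 1)^2 \<noteq> (a 2)^2" using d by auto
    then have "a 1 \<noteq> a 2" "a 1 \<noteq> - a 2" using power2_eq_iff by auto
    moreover have "a 1 \<in> A" "a 2 \<in> A" using m by auto
    ultimately have "x \<in> rs A" using x2 unfolding rs_def by blast
    moreover have "x \<noteq> 0" using x2 \<open>a 1 \<noteq> - a 2\<close> by auto
    ultimately show "x \<in> rs A - {0}" by blast
  qed
next
  show "rs A - {0} \<subseteq> restricted_sumset 2 A"
  proof
    fix x assume "x \<in> rs A - {0}"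
    then obtain a b where ab: "x = a + b" "a \<in> A" "b \<in> A" "a \<noteq> b" "a + b \<noteq> 0"
      unfolding rs_def by auto
    define f where "f = (\<lambda>i::nat. if i = 1 then a else b)"
    have "{1..2::nat} = {1,2}" by auto
    then have "x = (\<Sum>i\<in>{1..2::nat}. f i)" using ab by (simp add: f_def)
    moreover have "\<forall>i\<in>{1..2}. f i \<in> A" using ab by (simp add: f_def)
    moreover have "\<forall>i\<in>{1..2::nat}. \<forall>j\<in>{1..2}. i < j \<longrightarrow> (f i)^2 \<noteq> (f j)^2"
    proof (intro ballI impI)
      fix i j :: nat assume "i \<in> {1..2}" "j \<in> {1..2}" "i < j"
      then have "i = 1" "j = 2" by auto
      have "a \<noteq> - b" using ab by auto
      then have "a^2 \<noteq> b^2" using ab(4) by (simp add: power2_eq_iff)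
      then show "(f i)^2 \<noteq> (f j)^2" using \<open>i=1\<close> \<open>j=2\<close> by (simp add: f_def)
    qed
    ultimately show "x \<in> restricted_sumset 2 A" unfolding restricted_sumset_def by blast
  qed
qed

lemma rs_zero: "0 \<in> rs A \<longleftrightarrow> (\<exists>x>0. x \<in> A \<and> -x \<in> A)"
proof
  assume "0 \<in> rs A"
  then obtain a b where "a \<in> A" "b \<in> A" "a \<noteq> b" "0 = a + b" unfolding rs_def by auto
  then show "\<exists>x>0. x \<in> A \<and> -x \<in> A"
    by (metis add.inverse_unique add.inverse_inverse neg_0_equal_iff_equal neg_less_0_iff_less linorder_neqE_linordered_idom)
next
  assume "\<exists>x>0. x \<in> A \<and> -x \<in> A"
  then obtain x where "x > 0" "x \<in> A" "-x \<in> A" by auto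
  then show "0 \<in> rs A" unfolding rs_def by (intro CollectI exI[of _ x] exI[of _ "-x"]) auto
qed

lemma rs_le_max:
  assumes "finite B" "x \<in> rs B" "card B \<ge> 2"
  shows "x \<le> Max B + Max (B - {Max B})"
proof -
  obtain b b' where bb: "x = b + b'" "b \<in> B" "b' \<in> B" "b \<noteq> b'" using assms(2) unfolding rs_def by auto
  have ne: "B \<noteq> {}" using assms(3) by auto
  have "card (B - {Max B}) = card B - 1" using assms(1) ne by (simp add: card_Diff_singleton)
  then have ne2: "B - {Max B} \<noteq> {}" using assms(3) by (metis card.empty diff_is_0_eq' one_le_numeral order_trans not_one_le_zero le_numeral_extra(4) diff_diff_cancel diff_zero Suc_1 not_less_eq_eq numeral_le_one_iff semiring_norm(69) zero_less_diff le_antisym)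
  have fin2: "finite (B - {Max B})" using assms(1) by auto
  have "b \<le> Max B" "b' \<le> Max B" using bb assms(1) by auto
  then have key: "min b b' \<in> B - {Max B}" "max b b' \<le> Max B"
    using bb by (auto simp: min_def max_def)
  have "min b b' \<le> Max (B - {Max B})" using key(1) fin2 by auto
  then show ?thesis using key(2) bb(1) by (simp add: min_def max_def split: if_splits)
qed

lemma card_Diff_Max_ne:
  fixes B :: "int set"
  assumes "finite B" "card B \<ge> 2"
  shows "B - {Max B} \<noteq> {}" "card (B - {Max B}) = card B - 1" "Max (B - {Max B}) < Max B"
    "Max B \<in> B" "Max (B - {Max B}) \<in> B"
proof -
  have ne: "B \<noteq> {}" using assms by auto
  show c: "card (B - {Max B}) = card B - 1" using assms(1) ne by (simp add: card_Diff_singleton)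
  have "card (B - {Max B}) \<ge> 1" using c assms(2) by linarith
  then show ne2: "B - {Max B} \<noteq> {}" by (metis card.empty not_one_le_zero)
  show "Max B \<in> B" using assms(1) ne by simp
  have "Max (B - {Max B}) \<in> B - {Max B}" using ne2 assms(1) by (intro Max_in) auto
  then show "Max (B - {Max B}) \<in> B" "Max (B - {Max B}) < Max B"
    using assms(1) by (auto simp: order_le_neq_trans)
qed

lemma rs_step:
  assumes "finite A" "card A \<ge> 3"
  shows "card (rs (A - {Max A})) + 2 \<le> card (rs A)"
proof -
  define B where "B = A - {Max A}"
  define m where "m = Max A"
  define m2 where "m2 = Max B"
  define m3 where "m3 = Max (B - {m2})"
  have cB: "card B = card A - 1" "finite B" using card_Diff_Max_ne[OF assms(1)] assms(2) unfolding B_def by auto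
  then have cB2: "card B \<ge> 2" using assms(2) by auto
  have A: "m \<in> A" "m2 < m" "m2 \<in> A"
    using card_Diff_Max_ne[OF assms(1)] assms(2) unfolding B_def m_def m2_def by auto
  have B: "m3 < m2" "m3 \<in> B" "m2 \<in> B" using card_Diff_Max_ne[OF cB(2) cB2] unfolding m3_def m2_def by auto
  have sub: "rs B \<subseteq> rs A" unfolding B_def by (rule rs_mono) auto
  have m3A: "m3 \<in> A" using B unfolding B_def by auto
  have "m \<noteq> m2" "m \<noteq> m3" using A B by auto
  then have in1: "m + m2 \<in> rs A" "m + m3 \<in> rs A" using A m3A unfolding rs_def by blast+
  have le: "\<And>x. x \<in> rs B \<Longrightarrow> x \<le> m2 + m3" using rs_le_max[OF cB(2) _ cB2] unfolding m3_def m2_def by blast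
  have "m + m2 > m2 + m3" "m + m3 > m2 + m3" using A B by linarith+
  then have n1: "m + m2 \<notin> rs B" "m + m3 \<notin> rs B" using le by force+
  have "rs B \<union> {m + m2, m + m3} \<subseteq> rs A" using sub in1 by auto
  then have "card (rs B \<union> {m + m2, m + m3}) \<le> card (rs A)"
    using rs_finite[OF assms(1)] by (rule card_mono[rotated])
  moreover have "card (rs B \<union> {m + m2, m + m3}) = card (rs B) + 2"
    using n1 B rs_finite[OF cB(2)] by simp
  ultimately have "card (rs B) + 2 \<le> card (rs A)" by linarith
  then show ?thesis by (simp only: B_def)
qed

lemma rs_lower_aux:
  "card A = n \<Longrightarrow> finite A \<Longrightarrow> n \<ge> 2 \<Longrightarrow> 2 * n - 3 \<le> card (rs A)"
proof (induction n arbitrary: A)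
  case 0 then show ?case by simp
next
  case (Suc n)
  show ?case
  proof (cases "n = 1")
    case True
    then obtain x y where "A = {x,y}" "x \<noteq> y" using Suc.prems card_2_iff by (metis Suc_1)
    then have "x + y \<in> rs A" unfolding rs_def by auto
    then have "card (rs A) \<ge> 1" using rs_finite[OF Suc.prems(2)]
      by (metis One_nat_def Suc_leI card_gt_0_iff empty_iff)
    then show ?thesis using True by simp
  next
    case False
    then have n2: "n \<ge> 2" using Suc.prems by auto
    have "card (A - {Max A}) = n" using card_Diff_Max_ne[OF Suc.prems(2)] Suc.prems by auto
    then have "2 * n - 3 \<le> card (rs (A - {Max A}))" using Suc.IH Suc.prems(2) n2 by blast
    moreover have "card (rs (A - {Max A})) + 2 \<le> card (rs A)" using rs_step[OF Suc.prems(2)] Suc.prems(1) n2 by simp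
    ultimately show ?thesis using n2 by simp
  qed
qed

lemma rs_lower: "finite A \<Longrightarrow> card A \<ge> 2 \<Longrightarrow> 2 * card A - 3 \<le> card (rs A)"
  using rs_lower_aux[OF refl] by simp



lemma rs_I: "a \<in> A \<Longrightarrow> b \<in> A \<Longrightarrow> a \<noteq> b \<Longrightarrow> a + b \<in> rs A"
  unfolding rs_def by (rule CollectI, rule exI[of _ a], rule exI[of _ b]) simp

lemma five_sorted:
  fixes A :: "int set"
  assumes "finite A" "card A = 5"
  obtains a1 a2 a3 a4 a5 where "a1 < a2" "a2 < a3" "a3 < a4" "a4 < a5" "A = {a1,a2,a3,a4,a5}"
proof -
  have "sorted_wrt (<) (sorted_list_of_set A)" by simp
  then have "\<exists>l. sorted_wrt (<) l \<and> set l = A \<and> length l = card A"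
    using assms by (intro exI[of _ "sorted_list_of_set A"]) simp
  then obtain l where l: "sorted_wrt (<) l" "set l = A" "length l = card A" by blast
  have "length l = 5" using l assms by simp
  then have "\<exists>a1 a2 a3 a4 a5. l = [a1,a2,a3,a4,a5]"
    by (simp add: length_Suc_conv numeral_eq_Suc) blast
  then obtain a1 a2 a3 a4 a5 where L: "l = [a1,a2,a3,a4,a5]" by blast
  have "a1 < a2 \<and> a2 < a3 \<and> a3 < a4 \<and> a4 < a5" using l(1) unfolding L by simp
  moreover have "A = {a1,a2,a3,a4,a5}" using l(2) unfolding L by simp
  ultimately show ?thesis using that by blast
qed

lemma int_0_4: "{0..4::int} = {0,1,2,3,4}" by auto

lemma ap5:
  fixes a1 a2 a3 a4 a5 :: int
  assumes o: "a1 < a2" "a2 < a3" "a3 < a4" "a4 < a5" and A: "A = {a1,a2,a3,a4,a5}"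
    and c: "card (rs A) = 7"
  shows "A = (\<lambda>r. a1 + r * (a2 - a1)) ` {0..4}"
proof -
  define C where "C = {a1+a2, a1+a3, a1+a4, a1+a5, a2+a5, a3+a5, a4+a5}"
  have "C \<subseteq> rs A" unfolding C_def using o by (auto simp: A intro!: rs_I)
  moreover have "card C = 7" unfolding C_def using o by auto
  moreover have "finite (rs A)" using A rs_finite by auto
  ultimately have CA: "C = rs A" using c by (metis card_subset_eq)
  have "a2 + a3 \<in> C" "a2 + a4 \<in> C" "a3 + a4 \<in> C" unfolding CA using o by (auto simp: A intro!: rs_I)
  then have e: "a2 + a4 = a1 + a5" "a3 + a4 = a2 + a5" "a2 + a3 = a1 + a4"
    unfolding C_def using o by auto
  show ?thesis unfolding int_0_4 A using e by (auto simp: algebra_simps)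
qed

lemma rs_AP_sub:
  "rs ((\<lambda>r. a + r * g) ` {s..t}) \<subseteq> (\<lambda>j. 2 * a + j * g) ` {2*s+1..2*t-1}"
proof
  fix x assume "x \<in> rs ((\<lambda>r. a + r * g) ` {s..t})"
  then obtain r r' where rr: "r \<in> {s..t}" "r' \<in> {s..t}" "a + r * g \<noteq> a + r' * g"
    "x = (a + r * g) + (a + r' * g)" unfolding rs_def by auto
  then have "r \<noteq> r'" by auto
  then have "r + r' \<in> {2*s+1..2*t-1}" using rr(1,2) by auto
  moreover have "x = 2 * a + (r + r') * g" using rr(4) by (simp add: algebra_simps)
  ultimately show "x \<in> (\<lambda>j. 2 * a + j * g) ` {2*s+1..2*t-1}" by blast
qed

lemma ap_inverse:
  "k \<ge> 5 \<Longrightarrow> card A = k \<Longrightarrow> finite A \<Longrightarrow> card (rs A) = 2*k-3 \<Longrightarrow>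
   \<exists>a g. g > 0 \<and> A = (\<lambda>r. a + r*g) ` {0..int k - 1}"
proof (induction k arbitrary: A rule: nat_induct_at_least)
  case base
  then obtain a1 a2 a3 a4 a5 where o: "a1 < a2" "a2 < a3" "a3 < a4" "a4 < a5" "A = {a1,a2,a3,a4,a5}"
    using five_sorted by metis
  have "A = (\<lambda>r. a1 + r * (a2 - a1)) ` {0..4}" using ap5[OF o] base by simp
  then show ?case using o(1) by (intro exI[of _ a1] exI[of _ "a2 - a1"]) simp
next
  case (Suc k)
  define m where "m = Max A"
  define B where "B = A - {m}"
  have fB: "finite B" using Suc.prems unfolding B_def by auto
  have cB: "card B = k" using card_Diff_Max_ne[OF Suc.prems(2)] Suc.prems Suc.hyps unfolding B_def m_def by auto
  have mA: "m \<in> A" using card_Diff_Max_ne[OF Suc.prems(2)] Suc.prems Suc.hyps unfolding m_def by auto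
  have lessm: "\<And>b. b \<in> B \<Longrightarrow> b < m"
    using Suc.prems(2) unfolding B_def m_def by (auto simp: order_le_neq_trans)
  have "2 * k - 3 \<le> card (rs B)" using rs_lower[OF fB] cB Suc.hyps by auto
  moreover have "card (rs B) + 2 \<le> card (rs A)" using rs_step[OF Suc.prems(2)] Suc.prems Suc.hyps
    unfolding B_def m_def by auto
  ultimately have crsB: "card (rs B) = 2 * k - 3" using Suc.prems Suc.hyps by auto
  define n where "n = int k - 1"
  obtain a g where g: "g > 0" and Bdef: "B = (\<lambda>r. a + r*g) ` {0..n}"
    using Suc.IH[OF cB fB crsB] unfolding n_def by blast
  have n4: "n \<ge> 4" using Suc.hyps unfolding n_def by auto
  have topB: "a + n * g \<in> B" unfolding Bdef using n4 by auto
  then have mbig: "m > a + n * g" using lessm by auto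
  have rsB_le: "\<And>x. x \<in> rs B \<Longrightarrow> x \<le> 2 * a + (2*n-1) * g"
  proof -
    fix x assume "x \<in> rs B"
    then obtain j where j: "j \<in> {2*0+1..2*n-1}" "x = 2 * a + j * g"
      using rs_AP_sub[of a g 0 n] unfolding Bdef by blast
    have "j * g \<le> (2*n-1) * g" using j(1) g by (intro mult_right_mono) auto
    then show "x \<le> 2 * a + (2*n-1) * g" using j(2) by simp
  qed
  define T where "T = (\<lambda>b. m + b) ` B"
  have cT: "card T = k" unfolding T_def using cB by (simp add: card_image)
  have fT: "finite T" unfolding T_def using fB by simp
  have BA: "B \<subseteq> A" unfolding B_def by auto
  have TA: "T \<subseteq> rs A" unfolding T_def
  proof
    fix x assume "x \<in> (\<lambda>b. m + b) ` B"
    then obtain b where "b \<in> B" "x = m + b" by auto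
    then show "x \<in> rs A" using rs_I[of m A b] mA BA lessm by fastforce
  qed
  have UA: "rs B \<union> T \<subseteq> rs A" using TA rs_mono[OF BA] by auto
  have cU: "card (rs B \<union> T) \<le> 2 * k - 1"
    using card_mono[OF rs_finite[OF Suc.prems(2)] UA] Suc.prems by auto
  have claim: "m + (a + i * g) \<in> rs B" if i: "0 \<le> i" "i \<le> n - 2" for i
  proof (rule ccontr)
    assume X: "m + (a + i * g) \<notin> rs B"
    define Y1 where "Y1 = m + (a + (n-1) * g)"
    define Y2 where "Y2 = m + (a + n * g)"
    have "(n-1) * g \<ge> 0" using n4 g by simp
    have Y: "Y1 \<notin> rs B" "Y2 \<notin> rs B"
    proof -
      have "Y1 > 2 * a + (2*n-1) * g" unfolding Y1_def using mbig by (simp add: algebra_simps)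
      moreover have "Y2 > 2 * a + (2*n-1) * g" unfolding Y2_def using mbig g by (simp add: algebra_simps)
      ultimately show "Y1 \<notin> rs B" "Y2 \<notin> rs B" using rsB_le by force+
    qed
    have inT: "m + (a + i * g) \<in> T" "Y1 \<in> T" "Y2 \<in> T"
      unfolding T_def Y1_def Y2_def Bdef using i n4 by (auto intro!: imageI)
    have ig1: "i * g < (n-1) * g" using i g by (intro mult_strict_right_mono) auto
    have ig2: "(n-1) * g < n * g" using g by (intro mult_strict_right_mono) auto
    have dist: "m + (a + i * g) \<noteq> Y1" "m + (a + i * g) \<noteq> Y2" "Y1 \<noteq> Y2"
      unfolding Y1_def Y2_def using ig1 ig2 by auto
    have "rs B \<inter> T \<subseteq> T - {m + (a + i * g), Y1, Y2}" using X Y by auto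
    then have "card (rs B \<inter> T) \<le> card (T - {m + (a + i * g), Y1, Y2})"
      using fT by (intro card_mono) auto
    also have "\<dots> = k - 3" using inT dist cT fT by (simp add: card_Diff_subset)
    finally have ci: "card (rs B \<inter> T) \<le> k - 3" .
    have "card (rs B \<union> T) + card (rs B \<inter> T) = card (rs B) + card T"
      using card_Un_Int[OF rs_finite[OF fB] fT] by simp
    then show False using ci cU crsB cT Suc.hyps by linarith
  qed
  have "m + (a + 0 * g) \<in> rs B" using claim[of 0] n4 by simp
  then have "m + a \<in> (\<lambda>j. 2 * a + j * g) ` {2*0+1..2*n-1}"
    using rs_AP_sub[of a g 0 n] unfolding Bdef by auto
  then obtain j where j: "m + a = 2 * a + j * g" by blast
  have "m + (a + (n-2) * g) \<in> rs B" using claim[of "n-2"] n4 by simp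
  then have "m + (a + (n-2) * g) \<le> 2 * a + (2*n-1) * g" using rsB_le by blast
  then have le1: "j * g \<le> (n+1) * g" using j by (simp add: algebra_simps)
  have lt1: "n * g < j * g" using mbig j by (simp add: algebra_simps)
  have "j \<le> n + 1" using le1 g by (simp add: mult_le_cancel_right)
  moreover have "n < j" using lt1 g by (simp add: mult_less_cancel_right)
  ultimately have jn: "j = n + 1" by simp
  have mform: "m = a + (n+1) * g" using j jn by simp
  have "A = insert m B" unfolding B_def using mA by auto
  also have "\<dots> = (\<lambda>r. a + r*g) ` {0..n+1}"
  proof -
    have "{0..n+1} = insert (n+1) {0..n}" using n4 by auto
    then show ?thesis unfolding Bdef mform by simp
  qed
  finally show ?case using g unfolding n_def by (intro exI[of _ a] exI[of _ g]) simp
qed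



lemma card_le_list: "S \<subseteq> set xs \<Longrightarrow> card S \<le> length xs"
  by (meson List.finite_set card_length card_mono order_trans)

lemma rs_subI: "(\<And>a b. a \<in> A \<Longrightarrow> b \<in> A \<Longrightarrow> a \<noteq> b \<Longrightarrow> a + b \<in> S) \<Longrightarrow> rs A \<subseteq> S"
  unfolding rs_def by blast

lemma AP_card:
  fixes g :: int assumes "g \<noteq> 0"
  shows "card ((\<lambda>r. a + r * g) ` {s..t}) = nat (t - s + 1)"
proof -
  have "inj_on (\<lambda>r. a + r * g) {s..t}" using assms by (auto simp: inj_on_def)
  then show ?thesis by (simp add: card_image)
qed

lemma AP_rs_card:
  fixes g :: int
  shows "card (rs ((\<lambda>r. a + r * g) ` {s..t})) \<le> nat (2*t - 2*s - 1)"
proof -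
  have "card (rs ((\<lambda>r. a + r * g) ` {s..t})) \<le> card ((\<lambda>j. 2 * a + j * g) ` {2*s+1..2*t-1})"
    by (intro card_mono rs_AP_sub) auto
  also have "\<dots> \<le> card {2*s+1..2*t-1}" by (rule card_image_le) auto
  also have "\<dots> = nat (2*t - 2*s - 1)" by simp
  finally show ?thesis .
qed

lemma AP_back:
  fixes g :: int
  assumes "g \<noteq> 0" "s < t" "A = (\<lambda>r. a + r * g) ` {s..t}"
  shows "card (rs A) \<le> 2 * card A - 3"
proof -
  have "card A = nat (t - s + 1)" using AP_card[OF assms(1)] assms(3) by simp
  moreover have "card (rs A) \<le> nat (2*t - 2*s - 1)" using AP_rs_card assms(3) by simp
  ultimately show ?thesis using assms(2) by linarith
qed

lemma bk1:
  fixes c d :: int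
  assumes "d > 0" "\<bar>c\<bar> \<noteq> d" and A: "A = {c, d, -d}"
  shows "0 \<in> rs A \<and> card (rs A) \<le> 2 * card A - 3"
proof -
  have cA: "card A = 3" using assms by (auto simp: abs_if split: if_splits)
  have "d \<in> A" "-d \<in> A" "d \<noteq> -d" using assms(1) by (auto simp: A)
  then have "d + -d \<in> rs A" by (rule rs_I)
  then have z: "0 \<in> rs A" by simp
  have sub: "rs A \<subseteq> set [c + d, c - d, 0]" unfolding A by (rule rs_subI) auto
  then have "card (rs A) \<le> 3" using card_le_list[OF sub] by simp
  then show ?thesis using cA z by simp
qed

lemma bk2:
  fixes c d :: int
  assumes "c > 0" "d > 0" "c \<noteq> d" and A: "A = {c, -c, d, -d}"
  shows "0 \<in> rs A \<and> card (rs A) \<le> 2 * card A - 3"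
proof -
  have cA: "card A = 4" using assms by auto
  have "d \<in> A" "-d \<in> A" "d \<noteq> -d" using assms(2) by (auto simp: A)
  then have "d + -d \<in> rs A" by (rule rs_I)
  then have z: "0 \<in> rs A" by simp
  have sub: "rs A \<subseteq> set [0, c + d, c - d, d - c, -c-d]" unfolding A by (rule rs_subI) auto
  then have "card (rs A) \<le> 5" using card_le_list[OF sub] by simp
  then show ?thesis using cA z by simp
qed

lemma bk3:
  fixes c d :: int
  assumes "d > 0" "c \<noteq> 0" "c \<noteq> 2*d" "c \<noteq> -2*d" and A: "A = {d, -d} \<union> {c + d, c - d}"
  shows "0 \<in> rs A \<and> card (rs A) \<le> 2 * card A - 3"
proof -
  have cA: "card A = 4" using assms by auto
  have "d \<in> A" "-d \<in> A" "d \<noteq> -d" using assms(1) by (auto simp: A)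
  then have "d + -d \<in> rs A" by (rule rs_I)
  then have z: "0 \<in> rs A" by simp
  have sub: "rs A \<subseteq> set [0, c + 2*d, c, c - 2*d, 2*c]" unfolding A by (rule rs_subI) auto
  then have "card (rs A) \<le> 5" using card_le_list[OF sub] by simp
  then show ?thesis using cA z by simp
qed

lemma bk4:
  fixes d s t :: int
  assumes "d \<noteq> 0" "s \<le> -1" "t \<ge> 1" "A = {r * d | r. s \<le> r \<and> r \<le> t}"
  shows "0 \<in> rs A \<and> card (rs A) \<le> 2 * card A - 3"
proof -
  have A: "A = (\<lambda>r. 0 + r * d) ` {s..t}" using assms(4) by auto
  have "0 + 1 * d \<in> A" "0 + (-1) * d \<in> A" unfolding A using assms(2,3) by (intro imageI; simp)+
  then have "d \<in> A" "-d \<in> A" by simp_all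
  then have "0 \<in> rs A" using assms(1) rs_I[of d A "-d"] by auto
  moreover have "card (rs A) \<le> 2 * card A - 3" using AP_back[OF assms(1) _ A] assms by simp
  ultimately show ?thesis by simp
qed

lemma bk5:
  fixes d s t :: int
  assumes "d \<noteq> 0" "s \<le> 0" "t \<ge> 1" "A = {(2*r - 1) * d | r. s \<le> r \<and> r \<le> t}"
  shows "0 \<in> rs A \<and> card (rs A) \<le> 2 * card A - 3"
proof -
  have A: "A = (\<lambda>r. (-d) + r * (2*d)) ` {s..t}" using assms(4) by (auto simp: algebra_simps)
  have "(-d) + 1 * (2*d) \<in> A" "(-d) + 0 * (2*d) \<in> A" unfolding A using assms(2,3) by (intro imageI; simp)+
  then have "d \<in> A" "-d \<in> A" by simp_all
  then have "0 \<in> rs A" using assms(1) rs_I[of d A "-d"] by auto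
  moreover have "card (rs A) \<le> 2 * card A - 3" using AP_back[OF _ _ A] assms by simp
  ultimately show ?thesis by simp
qed



lemma fw3:
  fixes A :: "int set"
  assumes "finite A" "card A = 3" "x > 0" "x \<in> A" "-x \<in> A"
  shows "\<exists>c d::int. d > 0 \<and> \<bar>c\<bar> \<noteq> d \<and> A = {c, d, -d}"
proof -
  have "{x, -x} \<subseteq> A" "card {x, -x} = 2" using assms by auto
  then have "card (A - {x, -x}) = 1" using assms(1,2) by (simp add: card_Diff_subset)
  then obtain c where c: "A - {x, -x} = {c}" using card_1_singletonE by blast
  then have "A = {c, x, -x}" using assms(4,5) by auto
  moreover have "c \<noteq> x" "c \<noteq> -x" using c by auto
  then have "\<bar>c\<bar> \<noteq> x" by (cases "c \<ge> 0") auto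
  ultimately show ?thesis using assms(3) by blast
qed

lemma fw4:
  fixes A :: "int set"
  assumes "finite A" "card A = 4" "x > 0" "x \<in> A" "-x \<in> A" "card (rs A) = 5"
  shows "(\<exists>c d::int. c > 0 \<and> d > 0 \<and> c \<noteq> d \<and> A = {c, -c, d, -d}) \<or>
     (\<exists>c d::int. d > 0 \<and> c \<noteq> 0 \<and> c \<noteq> 2*d \<and> c \<noteq> -2*d \<and> A = {d, -d} \<union> {c + d, c - d})"
proof -
  have "{x, -x} \<subseteq> A" "card {x, -x} = 2" using assms(3,4,5) by auto
  then have "card (A - {x, -x}) = 2" using assms(1,2) by (simp add: card_Diff_subset)
  then obtain u v where uv: "A - {x, -x} = {u, v}" "u \<noteq> v" unfolding card_2_iff by blast
  then have A: "A = {x, -x, u, v}" using assms(4,5) by auto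
  have "u \<in> A - {x, -x}" "v \<in> A - {x, -x}" using uv(1) by auto
  then have nu: "u \<noteq> x" "u \<noteq> -x" "v \<noteq> x" "v \<noteq> -x" by auto
  have "u + v = 0 \<or> v - u = 2*x \<or> u - v = 2*x"
  proof (rule ccontr)
    assume H: "\<not> (u + v = 0 \<or> v - u = 2*x \<or> u - v = 2*x)"
    have sub: "{0, x+u, x+v, u-x, v-x, u+v} \<subseteq> rs A"
    proof -
      have r1: "x + -x \<in> rs A" using nu uv(2) assms(3) by (intro rs_I) (auto simp: A)
      have r2: "x + u \<in> rs A" using nu uv(2) assms(3) by (intro rs_I) (auto simp: A)
      have r3: "x + v \<in> rs A" using nu uv(2) assms(3) by (intro rs_I) (auto simp: A)
      have r4: "-x + u \<in> rs A" using nu uv(2) assms(3) by (intro rs_I) (auto simp: A)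
      have r5: "-x + v \<in> rs A" using nu uv(2) assms(3) by (intro rs_I) (auto simp: A)
      have r6: "u + v \<in> rs A" using nu uv(2) assms(3) by (intro rs_I) (auto simp: A)
      show ?thesis using r1 r2 r3 r4 r5 r6 by (simp add: algebra_simps)
    qed
    have "card {0, x+u, x+v, u-x, v-x, u+v} = 6" using H nu uv(2) assms(3) by auto
    then have "6 \<le> card (rs A)" using card_mono[OF rs_finite[OF assms(1)] sub] by simp
    then show False using assms(6) by simp
  qed
  then consider "u + v = 0" | "v - u = 2*x" | "u - v = 2*x" by blast
  then show ?thesis
  proof cases
    case 1
    have "u \<noteq> 0" using 1 uv(2) by auto
    have "{u, v} = {\<bar>u\<bar>, -\<bar>u\<bar>}" using 1 by (auto simp: abs_if)
    then have "A = {x, -x, \<bar>u\<bar>, -\<bar>u\<bar>}" using A by auto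
    moreover have "\<bar>u\<bar> \<noteq> x" using nu by (auto simp: abs_if split: if_splits)
    ultimately show ?thesis using \<open>u \<noteq> 0\<close> assms(3) by (intro disjI1 exI[of _ x] exI[of _ "\<bar>u\<bar>"]) auto
  next
    case 2
    have "A = {x, -x} \<union> {(u + x) + x, (u + x) - x}" using A 2 by (auto simp: algebra_simps)
    moreover have "u + x \<noteq> 0" "u + x \<noteq> 2*x" "u + x \<noteq> -2*x" using nu 2 by auto
    ultimately show ?thesis using assms(3) by (intro disjI2 exI[of _ "u + x"] exI[of _ x]) auto
  next
    case 3
    have "A = {x, -x} \<union> {(v + x) + x, (v + x) - x}" using A 3 by (auto simp: algebra_simps)
    moreover have "v + x \<noteq> 0" "v + x \<noteq> 2*x" "v + x \<noteq> -2*x" using nu 3 by auto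
    ultimately show ?thesis using assms(3) by (intro disjI2 exI[of _ "v + x"] exI[of _ x]) auto
  qed
qed

lemma fw5:
  fixes A :: "int set"
  assumes "finite A" "card A \<ge> 5" "x > 0" "x \<in> A" "-x \<in> A" "card (rs A) = 2 * card A - 3"
  shows "(\<exists>d s t::int. d \<noteq> 0 \<and> s \<le> -1 \<and> t \<ge> 1 \<and> t - s \<ge> 4 \<and> A = {r * d | r. s \<le> r \<and> r \<le> t}) \<or>
     (\<exists>d s t::int. d \<noteq> 0 \<and> s \<le> 0 \<and> t \<ge> 1 \<and> t - s \<ge> 4 \<and> A = {(2*r - 1) * d | r. s \<le> r \<and> r \<le> t})"
proof -
  define n where "n = int (card A) - 1"
  obtain a g where g: "g > 0" and Ad: "A = (\<lambda>r. a + r*g) ` {0..n}"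
    using ap_inverse[OF assms(2) refl assms(1) assms(6)] unfolding n_def by blast
  have n4: "n \<ge> 4" using assms(2) n_def by simp
  obtain i where i: "i \<in> {0..n}" "x = a + i*g" using assms(4) Ad by blast
  obtain j where j: "j \<in> {0..n}" "-x = a + j*g" using assms(5) Ad by blast
  have sum0: "2*a + (i+j)*g = 0" using i(2) j(2) by (simp add: algebra_simps)
  show ?thesis
  proof (cases "even (i+j)")
    case True
    then obtain m where m: "i + j = 2*m" by (rule evenE)
    have a: "a = -(m*g)" using sum0 m by (simp add: algebra_simps)
    have "(i - m) * g > 0" using i(2) a assms(3) by (simp add: algebra_simps)
    then have im: "i - m > 0" using g by (simp add: zero_less_mult_iff)
    have "(j - m) * g < 0" using j(2) a assms(3) by (simp add: algebra_simps)
    then have jm: "j - m < 0" using g by (simp add: mult_less_0_iff)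
    have img: "A = (\<lambda>r. r * g) ` {-m..n-m}"
    proof
      show "A \<subseteq> (\<lambda>r. r * g) ` {-m..n-m}"
      proof
        fix y assume "y \<in> A"
        then obtain r where r: "r \<in> {0..n}" "y = a + r * g" using Ad by blast
        then have "y = (r - m) * g" "r - m \<in> {-m..n-m}" using a by (auto simp: algebra_simps)
        then show "y \<in> (\<lambda>r. r * g) ` {-m..n-m}" by blast
      qed
    next
      show "(\<lambda>r. r * g) ` {-m..n-m} \<subseteq> A"
      proof
        fix y assume "y \<in> (\<lambda>r. r * g) ` {-m..n-m}"
        then obtain r where r: "r \<in> {-m..n-m}" "y = r * g" by blast
        then have "y = a + (r + m) * g" "r + m \<in> {0..n}" using a by (auto simp: algebra_simps)
        then show "y \<in> A" unfolding Ad by blast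
      qed
    qed
    have "A = {r * g | r. -m \<le> r \<and> r \<le> n - m}" unfolding img by auto
    moreover have "-m \<le> -1" "n - m \<ge> 1" "(n - m) - (-m) \<ge> 4" using im jm i(1) j(1) n4 by auto
    ultimately show ?thesis using g by (intro disjI1 exI[of _ g] exI[of _ "-m"] exI[of _ "n - m"]) auto
  next
    case False
    then obtain m where m: "i + j = 2*m + 1" by (rule oddE)
    define d where "d = -(a + m*g)"
    have gd: "g = 2*d" using sum0 m unfolding d_def by (simp add: algebra_simps)
    have "a = -d - m*g" unfolding d_def by simp
    then have ad: "a = -(2*m+1)*d" unfolding gd by (simp add: algebra_simps)
    have d0: "d \<noteq> 0" using g gd by auto
    have img: "A = (\<lambda>r. (2*r - 1) * d) ` {-m..n-m}"
    proof
      show "A \<subseteq> (\<lambda>r. (2*r - 1) * d) ` {-m..n-m}"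
      proof
        fix y assume "y \<in> A"
        then obtain r where r: "r \<in> {0..n}" "y = a + r * g" using Ad by blast
        then have "y = (2*(r - m) - 1) * d" "r - m \<in> {-m..n-m}" using ad gd by (auto simp: algebra_simps)
        then show "y \<in> (\<lambda>r. (2*r - 1) * d) ` {-m..n-m}" by blast
      qed
    next
      show "(\<lambda>r. (2*r - 1) * d) ` {-m..n-m} \<subseteq> A"
      proof
        fix y assume "y \<in> (\<lambda>r. (2*r - 1) * d) ` {-m..n-m}"
        then obtain r where r: "r \<in> {-m..n-m}" "y = (2*r - 1) * d" by blast
        then have "y = a + (r + m) * g" "r + m \<in> {0..n}" using ad gd by (auto simp: algebra_simps)
        then show "y \<in> A" unfolding Ad by blast
      qed
    qed
    have "A = {(2*r - 1) * d | r. -m \<le> r \<and> r \<le> n - m}" unfolding img by auto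
    moreover have "-m \<le> 0" "n - m \<ge> 1" "(n - m) - (-m) \<ge> 4" using m i(1) j(1) n4 by auto
    ultimately show ?thesis using d0 by (intro disjI2 exI[of _ d] exI[of _ "-m"] exI[of _ "n - m"]) auto
  qed
qed



theorem theorem1p3:
  fixes A :: "int set"
  assumes "finite A" and "card A \<ge> 3"
  shows "int (card (restricted_sumset 2 A)) = 2 * int (card A) - 4 \<longleftrightarrow>
    ((\<exists>c d::int. d > 0 \<and> \<bar>c\<bar> \<noteq> d \<and> A = {c, d, -d}) \<or>
     (\<exists>c d::int. c > 0 \<and> d > 0 \<and> c \<noteq> d \<and> A = {c, -c, d, -d}) \<or>
     (\<exists>c d::int. d > 0 \<and> c \<noteq> 0 \<and> c \<noteq> 2*d \<and> c \<noteq> -2*d \<and> A = {d, -d} \<union> {c + d, c - d}) \<or>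
     (\<exists>d s t::int. d \<noteq> 0 \<and> s \<le> -1 \<and> t \<ge> 1 \<and> t - s \<ge> 4 \<and> A = {r * d | r. s \<le> r \<and> r \<le> t}) \<or>
     (\<exists>d s t::int. d \<noteq> 0 \<and> s \<le> 0 \<and> t \<ge> 1 \<and> t - s \<ge> 4 \<and> A = {(2*r - 1) * d | r. s \<le> r \<and> r \<le> t}))"
  (is "?L \<longleftrightarrow> ?D1 \<or> ?D2 \<or> ?D3 \<or> ?D4 \<or> ?D5")
proof -
  define k where "k = card A"
  have low: "2 * k - 3 \<le> card (rs A)" using rs_lower[OF assms(1)] assms(2) unfolding k_def by simp
  have cS: "card (restricted_sumset 2 A) = card (rs A - {0})" by (simp add: S2_eq)
  have key: "?L \<longleftrightarrow> 0 \<in> rs A \<and> card (rs A) = 2 * k - 3"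
  proof (cases "0 \<in> rs A")
    case True
    have "card (rs A) > 0" using True rs_finite[OF assms(1)] card_gt_0_iff by blast
    then have "card (rs A - {0}) + 1 = card (rs A)"
      using True rs_finite[OF assms(1)] by (simp add: card_Diff_singleton)
    then show ?thesis using True low assms(2) unfolding cS k_def by linarith
  next
    case False
    then have "card (rs A - {0}) = card (rs A)" by simp
    then show ?thesis using False low assms(2) unfolding cS k_def by linarith
  qed
  show ?thesis
  proof
    assume "?L"
    then have z: "0 \<in> rs A" and c: "card (rs A) = 2 * k - 3" using key by auto
    obtain x where x: "x > 0" "x \<in> A" "-x \<in> A" using z rs_zero by blast
    have "k = 3 \<or> k = 4 \<or> k \<ge> 5" using assms(2) unfolding k_def by linarith
    then show "?D1 \<or> ?D2 \<or> ?D3 \<or> ?D4 \<or> ?D5"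
    proof (elim disjE)
      assume "k = 3"
      then show ?thesis using fw3[OF assms(1) _ x] unfolding k_def by blast
    next
      assume "k = 4"
      then show ?thesis using fw4[OF assms(1) _ x] c unfolding k_def by auto
    next
      assume "k \<ge> 5"
      then show ?thesis using fw5[OF assms(1) _ x] c unfolding k_def by auto
    qed
  next
    assume "?D1 \<or> ?D2 \<or> ?D3 \<or> ?D4 \<or> ?D5"
    then have "0 \<in> rs A \<and> card (rs A) \<le> 2 * card A - 3"
    proof (elim disjE exE conjE)
      fix c d :: int assume "d > 0" "\<bar>c\<bar> \<noteq> d" "A = {c, d, -d}"
      then show ?thesis by (rule bk1)
    next
      fix c d :: int assume "c > 0" "d > 0" "c \<noteq> d" "A = {c, -c, d, -d}"
      then show ?thesis by (rule bk2)
    next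
      fix c d :: int assume "d > 0" "c \<noteq> 0" "c \<noteq> 2*d" "c \<noteq> -2*d" "A = {d, -d} \<union> {c + d, c - d}"
      then show ?thesis by (rule bk3)
    next
      fix d s t :: int assume "d \<noteq> 0" "s \<le> -1" "t \<ge> 1" "t - s \<ge> 4" "A = {r * d | r. s \<le> r \<and> r \<le> t}"
      then show ?thesis using bk4 by blast
    next
      fix d s t :: int assume "d \<noteq> 0" "s \<le> 0" "t \<ge> 1" "t - s \<ge> 4" "A = {(2*r - 1) * d | r. s \<le> r \<and> r \<le> t}"
      then show ?thesis using bk5 by blast
    qed
    then show "?L" using key low unfolding k_def by auto
  qed
qed

end
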